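(* Let $n\ge3$. For an SSM-recurrent configuration $c$ on $W_n$ with $\Phi_W(c)=(\mathcal O,M)$, let $S(\Phi_W(c))$ be the subgraph of $C_n$ whose vertex set is $\{i\in[n]: \text{the edge }\{i,i+1\}\text{ is directed } i+1\to i \text{ in } \mathcal O\}$ and whose edge set is $\{\{i-1,i\}: i\in M\}$. Then $c\mapsto S(\Phi_W(c))$ is a bijection from the set of SSM-recurrent configurations on $W_n$ onto $\mathrm{Sub}(C_n)$. Under this bijection, $\mathrm{level}(c)$ equals the number of edges of the subgraph, and $\mathrm{weight}^{01^*}(c)$ equals the number of vertices of $C_n$ not in the subgraph.
   Context: $C_n$: cycle on $[n]$ with edges $\{i,i+1\}$ (indices mod $n$, vertices clockwise); $W_n$: $C_n$ plus sink $0$ adjacent to all of $[n]$. $\mathrm{Sub}(C_n)$ is the set of subgraphs $(A,E_A)$ with $A\subseteq[n]$ non-empty and $E_A$ a set of edges of $C_n$ with both endpoints in $A$. Stable configurations on $W_n$: $\{0,1,2\}^n$. SSM (parameter $p\in(0,1)$: a toppling vertex sends a grain to each neighbour independently with probability $p$, grains to the sink vanish); Markov chain: add a grain at a random vertex, stabilise; SSM-recurrent = recurrent state; known: stable $c$ is SSM-recurrent iff for all $i,j$ with $c_i=c_j=0$ some $k\in(i,j)$ has $c_k=2$, $(i,j)$ being the vertices strictly between $i$ and $j$ clockwise from $i$ ($(i,i)=[n]\setminus\{i\}$). $\mathrm{level}(c)=\sum_i c_i-n$. Cyclically first maximal vertex: $c_i=2$ and some $j$ has $c_j=0$ and $c_k=1$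 for all $k\in(j,i)$. $m(c)$: $m(c)_i=0$ if $c_i=0$, $2$ if $i$ cyclically first maximal, $1$ otherwise. For $c'=m(c)$, $\mathcal O(c')$ is the unique orientation of $C_n$ with in-degree $c'_i$ at each $i$ if $c'\ne(1,\ldots,1)$, and the counter-clockwise cycle ($i+1\to i$ for all $i$) otherwise. $\Phi_W(c)=(\mathcal O(m(c)),M)$ with $M$ the set of $i$ with $c_i=2$ not cyclically first maximal. $\mathrm{weight}^{01^*}(c)$ is the number of vertices $i$ such that $c_i=0$, or $c_i=1$ and there is $j$ with $c_j=0$ and $c_k=1$ for all $k$ in the clockwise half-open interval $(j,i]$. *)

theory Defs
  imports Main
begin

text \<open>Vertices of the cycle C_n are 0,...,n-1 (standing for [n]); the clockwise
successor of i is (i+1) mod n. The sink of W_n is not represented.\<close>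

definition cyc_succ :: "nat \<Rightarrow> nat \<Rightarrow> nat" where
  "cyc_succ n i = (i + 1) mod n"

definition cyc_pred :: "nat \<Rightarrow> nat \<Rightarrow> nat" where
  "cyc_pred n i = (i + n - 1) mod n"

definition cyc_dist :: "nat \<Rightarrow> nat \<Rightarrow> nat \<Rightarrow> nat" where
  "cyc_dist n i j = (if i = j then n else (j + n - i) mod n)"

text \<open>Open clockwise interval (i,j); (i,i) = [n] minus i.\<close>
definition open_int :: "nat \<Rightarrow> nat \<Rightarrow> nat \<Rightarrow> nat set" where
  "open_int n i j = {(i + k) mod n | k. 0 < k \<and> k < cyc_dist n i j}"

definition halfopen_int :: "nat \<Rightarrow> nat \<Rightarrow> nat \<Rightarrow> nat set" where
  "halfopen_int n j i = {(j + k) mod n | k. 0 < k \<and> k \<le> cyc_dist n j i}"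

definition stable_configs :: "nat \<Rightarrow> (nat \<Rightarrow> nat) set" where
  "stable_configs n = {c. (\<forall>i<n. c i \<le> 2) \<and> (\<forall>i\<ge>n. c i = 0)}"

text \<open>SSM-recurrent stable configurations, via the known characterisation.\<close>
definition SSM_recurrent :: "nat \<Rightarrow> (nat \<Rightarrow> nat) set" where
  "SSM_recurrent n = {c \<in> stable_configs n.
     \<forall>i<n. \<forall>j<n. c i = 0 \<and> c j = 0 \<longrightarrow> (\<exists>k \<in> open_int n i j. c k = 2)}"

definition level :: "nat \<Rightarrow> (nat \<Rightarrow> nat) \<Rightarrow> int" where
  "level n c = (\<Sum>i<n. int (c i)) - int n"

definition cyc_first_max :: "nat \<Rightarrow> (nat \<Rightarrow> nat) \<Rightarrow> nat \<Rightarrow> bool" where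
  "cyc_first_max n c i \<longleftrightarrow> i < n \<and> c i = 2 \<and>
     (\<exists>j<n. c j = 0 \<and> (\<forall>k \<in> open_int n j i. c k = 1))"

definition mconf :: "nat \<Rightarrow> (nat \<Rightarrow> nat) \<Rightarrow> (nat \<Rightarrow> nat)" where
  "mconf n c = (\<lambda>i. if i < n then (if c i = 0 then 0 else if cyc_first_max n c i then 2 else 1)
                    else 0)"

text \<open>Orientations of C_n: ori i = True iff the edge {i,i+1} is directed i+1 -> i
  (counter-clockwise), for i < n.\<close>
definition orientations :: "nat \<Rightarrow> (nat \<Rightarrow> bool) set" where
  "orientations n = {ori. \<forall>i\<ge>n. \<not> ori i}"

definition indeg :: "nat \<Rightarrow> (nat \<Rightarrow> bool) \<Rightarrow> nat \<Rightarrow> nat" where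
  "indeg n ori i = (if ori i then 1 else 0) + (if ori (cyc_pred n i) then 0 else 1)"

definition orient_of :: "nat \<Rightarrow> (nat \<Rightarrow> nat) \<Rightarrow> (nat \<Rightarrow> bool)" where
  "orient_of n c' = (if (\<forall>i<n. c' i = 1) then (\<lambda>i. i < n)
     else (THE ori. ori \<in> orientations n \<and> (\<forall>i<n. indeg n ori i = c' i)))"

definition Mset :: "nat \<Rightarrow> (nat \<Rightarrow> nat) \<Rightarrow> nat set" where
  "Mset n c = {i. i < n \<and> c i = 2 \<and> \<not> cyc_first_max n c i}"

definition PhiW :: "nat \<Rightarrow> (nat \<Rightarrow> nat) \<Rightarrow> (nat \<Rightarrow> bool) \<times> nat set" where
  "PhiW n c = (orient_of n (mconf n c), Mset n c)"

definition cycle_edges :: "nat \<Rightarrow> nat set set" where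
  "cycle_edges n = {{i, cyc_succ n i} | i. i < n}"

definition Sub :: "nat \<Rightarrow> (nat set \<times> nat set set) set" where
  "Sub n = {(A, E). A \<subseteq> {..<n} \<and> A \<noteq> {} \<and> E \<subseteq> cycle_edges n \<and> (\<forall>e\<in>E. e \<subseteq> A)}"

definition Sgraph :: "nat \<Rightarrow> (nat \<Rightarrow> bool) \<times> nat set \<Rightarrow> nat set \<times> nat set set" where
  "Sgraph n OM = ({i. i < n \<and> fst OM i}, (\<lambda>i. {cyc_pred n i, i}) ` snd OM)"

definition weight01 :: "nat \<Rightarrow> (nat \<Rightarrow> nat) \<Rightarrow> nat" where
  "weight01 n c = card {i. i < n \<and> (c i = 0 \<or>
      (c i = 1 \<and> (\<exists>j<n. c j = 0 \<and> (\<forall>k \<in> halfopen_int n j i. c k = 1))))}"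

end

theory Submission
  imports Defs
begin

lemma pred_lin: "n > 0 \<Longrightarrow> i < n \<Longrightarrow> cyc_pred n i = (if i = 0 then n - 1 else i - 1)"
proof -
  assume a: "n > 0" "i < n"
  show ?thesis
  proof (cases "i = 0")
    case True then show ?thesis using a by (simp add: cyc_pred_def)
  next
    case False
    have "(i + n - 1) mod n = ((i - 1) + n) mod n" using False by (intro arg_cong[where f="\<lambda>x. x mod n"]) simp
    also have "\<dots> = i - 1" using a by simp
    finally show ?thesis using a False by (simp add: cyc_pred_def)
  qed
qed

lemma succ_lin: "i < n \<Longrightarrow> cyc_succ n i = (if i + 1 = n then 0 else i + 1)"
  by (simp add: cyc_succ_def)

lemma dist_lin: "i < n \<Longrightarrow> j < n \<Longrightarrow> cyc_dist n i j = (if i = j then n else if i < j then j - i else j + n - i)"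
proof -
  assume a: "i < n" "j < n"
  show ?thesis
  proof (cases "i < j")
    case True
    have "(j + n - i) mod n = ((j - i) + n) mod n" using True by (intro arg_cong[where f="\<lambda>x. x mod n"]) simp
    also have "\<dots> = j - i" using a by simp
    finally show ?thesis using a True by (simp add: cyc_dist_def)
  next
    case False
    then show ?thesis using a by (simp add: cyc_dist_def)
  qed
qed

lemma pred_mod_suc: "n > 0 \<Longrightarrow> cyc_pred n ((x+1) mod n) = x mod n"
proof -
  assume "n > 0"
  have "((x + 1) mod n + n - 1) mod n = ((x + 1) mod n + (n - 1)) mod n" using \<open>n > 0\<close> by simp
  also have "\<dots> = (x + 1 + (n - 1)) mod n" by (simp add: mod_add_left_eq)
  also have "\<dots> = (x + n) mod n" using \<open>n > 0\<close> by simp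
  also have "\<dots> = x mod n" by simp
  finally show ?thesis by (simp add: cyc_pred_def)
qed

lemma dist_add: "i < n \<Longrightarrow> j < n \<Longrightarrow> (i + cyc_dist n i j) mod n = j"
  by (auto simp: dist_lin)

lemma dist_pos: "i < n \<Longrightarrow> j < n \<Longrightarrow> 0 < cyc_dist n i j \<and> cyc_dist n i j \<le> n"
  by (auto simp: dist_lin)

lemma H1: "i < n \<Longrightarrow> j < n \<Longrightarrow> halfopen_int n j i = insert i (open_int n j i)"
proof -
  assume a: "i < n" "j < n"
  have "\<And>k. (0 < k \<and> k \<le> cyc_dist n j i) = (0 < k \<and> k < cyc_dist n j i \<or> k = cyc_dist n j i)"
    using dist_pos[OF a(2) a(1)] by auto
  then have "halfopen_int n j i = {(j + k) mod n |k. 0 < k \<and> k < cyc_dist n j i} \<union> {(j + cyc_dist n j i) mod n}"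
    unfolding halfopen_int_def by auto
  then show ?thesis unfolding open_int_def
    using dist_add[OF a(2) a(1)] by auto
qed

lemma H2: "n \<ge> 3 \<Longrightarrow> i < n \<Longrightarrow> j < n \<Longrightarrow> cyc_pred n i \<noteq> j \<Longrightarrow>
  open_int n j i = halfopen_int n j (cyc_pred n i)"
proof -
  assume a: "n \<ge> 3" "i < n" "j < n" "cyc_pred n i \<noteq> j"
  have d: "cyc_dist n j (cyc_pred n i) = cyc_dist n j i - 1" "cyc_dist n j i > 0"
    using a by (auto simp: dist_lin pred_lin split: if_splits)
  have "\<And>k. (0 < k \<and> k < cyc_dist n j i) = (0 < k \<and> k \<le> cyc_dist n j (cyc_pred n i))"
    using d by auto
  then show ?thesis unfolding halfopen_int_def open_int_def by simp
qed

lemma H3: "n \<ge> 3 \<Longrightarrow> i < n \<Longrightarrow> j < n \<Longrightarrow> cyc_pred n i = j \<Longrightarrow> open_int n j i = {}"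
proof -
  assume a: "n \<ge> 3" "i < n" "j < n" "cyc_pred n i = j"
  have d: "cyc_dist n j i = 1"
    using a by (auto simp: dist_lin pred_lin split: if_splits)
  then show ?thesis unfolding open_int_def by simp
qed

lemma open_lt: "n > 0 \<Longrightarrow> x \<in> open_int n j i \<Longrightarrow> x < n"
  unfolding open_int_def by auto

lemma pred_lt: "n > 0 \<Longrightarrow> cyc_pred n i < n"
  unfolding cyc_pred_def by simp


definition Wp :: "nat \<Rightarrow> (nat \<Rightarrow> nat) \<Rightarrow> nat \<Rightarrow> bool" where
  "Wp n c x \<longleftrightarrow> c x = 0 \<or> (c x = 1 \<and> (\<exists>j<n. c j = 0 \<and> (\<forall>k\<in>halfopen_int n j x. c k = 1)))"

lemma K: assumes "n \<ge> 3" "i < n"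
  shows "(\<exists>j<n. c j = 0 \<and> (\<forall>k\<in>open_int n j i. c k = 1)) \<longleftrightarrow> Wp n c (cyc_pred n i)"
proof
  assume "\<exists>j<n. c j = 0 \<and> (\<forall>k\<in>open_int n j i. c k = 1)"
  then obtain j where j: "j < n" "c j = 0" "\<forall>k\<in>open_int n j i. c k = 1" by blast
  show "Wp n c (cyc_pred n i)"
  proof (cases "cyc_pred n i = j")
    case True then show ?thesis using j by (simp add: Wp_def)
  next
    case False
    have pl: "cyc_pred n i < n" using assms pred_lt by simp
    have e: "open_int n j i = halfopen_int n j (cyc_pred n i)" using H2[OF assms j(1) False] .
    have "c (cyc_pred n i) = 1" using j(3) unfolding e H1[OF pl j(1)] by simp
    then show ?thesis using j e unfolding Wp_def by auto
  qed
next
  assume w: "Wp n c (cyc_pred n i)"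
  have pl: "cyc_pred n i < n" using assms pred_lt by simp
  show "\<exists>j<n. c j = 0 \<and> (\<forall>k\<in>open_int n j i. c k = 1)"
  proof (cases "c (cyc_pred n i) = 0")
    case True
    then show ?thesis using H3[OF assms _ refl] pl by (intro exI[of _ "cyc_pred n i"]) auto
  next
    case False
    then obtain j where j: "j < n" "c j = 0" "\<forall>k\<in>halfopen_int n j (cyc_pred n i). c k = 1"
      using w unfolding Wp_def by auto
    have "cyc_pred n i \<noteq> j" using False j by auto
    then have e: "open_int n j i = halfopen_int n j (cyc_pred n i)" using H2[OF assms j(1)] by simp
    show ?thesis using j e by auto
  qed
qed

lemma L1: assumes "n \<ge> 3" "i < n" "c i = 1"
  shows "Wp n c i \<longleftrightarrow> Wp n c (cyc_pred n i)"
proof -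
  have "Wp n c i \<longleftrightarrow> (\<exists>j<n. c j = 0 \<and> (\<forall>k\<in>open_int n j i. c k = 1))"
  proof -
    have "\<And>j. j < n \<Longrightarrow> halfopen_int n j i = insert i (open_int n j i)" using H1 assms(2) by blast
    then have "\<And>j. j < n \<Longrightarrow> (\<forall>k\<in>halfopen_int n j i. c k = 1) = (\<forall>k\<in>open_int n j i. c k = 1)"
      using assms(3) by simp
    then have "(\<exists>j<n. c j = 0 \<and> (\<forall>k\<in>halfopen_int n j i. c k = 1)) = (\<exists>j<n. c j = 0 \<and> (\<forall>k\<in>open_int n j i. c k = 1))"
      by blast
    then show ?thesis using assms unfolding Wp_def by simp
  qed
  then show ?thesis using K[OF assms(1,2)] by simp
qed

lemma FMchar: assumes "n \<ge> 3" "i < n"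
  shows "cyc_first_max n c i \<longleftrightarrow> c i = 2 \<and> Wp n c (cyc_pred n i)"
  using K[OF assms, of c] assms unfolding cyc_first_max_def by auto

lemma L0: assumes "n \<ge> 3" "c \<in> SSM_recurrent n" "i < n" "c i = 0"
  shows "\<not> Wp n c (cyc_pred n i)"
proof
  assume "Wp n c (cyc_pred n i)"
  then obtain j where j: "j < n" "c j = 0" "\<forall>k\<in>open_int n j i. c k = 1"
    using K[OF assms(1,3)] by blast
  then obtain k where "k \<in> open_int n j i" "c k = 2" using assms unfolding SSM_recurrent_def by blast
  then show False using j by auto
qed

lemma W2: "c i = 2 \<Longrightarrow> \<not> Wp n c i" by (simp add: Wp_def)
lemma W0: "c i = 0 \<Longrightarrow> Wp n c i" by (simp add: Wp_def)

lemma cyc_prop: assumes "n > 0" "j < n" "P j" "\<And>i. i < n \<Longrightarrow> P (cyc_pred n i) \<Longrightarrow> P i" "i < n"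
  shows "P i"
proof -
  have "P ((j + t) mod n)" for t
  proof (induction t)
    case 0 then show ?case using assms by simp
  next
    case (Suc t)
    have "cyc_pred n ((j + t + 1) mod n) = (j + t) mod n" using pred_mod_suc assms(1) by blast
    then show ?case using Suc assms(4)[of "(j + t + 1) mod n"] assms(1) by simp
  qed
  from this[of "cyc_dist n j i"] show ?thesis using dist_add[OF assms(2,5)] by simp
qed


lemma rec_le2: "c \<in> SSM_recurrent n \<Longrightarrow> i < n \<Longrightarrow> c i \<le> 2"
  unfolding SSM_recurrent_def stable_configs_def by auto

lemma indeg_ok: assumes "n \<ge> 3" "c \<in> SSM_recurrent n" "i < n"
  shows "indeg n (\<lambda>i. i < n \<and> \<not> Wp n c i) i = mconf n c i"
proof -
  have pl: "cyc_pred n i < n" using assms pred_lt by simp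
  have "c i = 0 \<or> c i = 1 \<or> c i = 2" using rec_le2[OF assms(2,3)] by auto
  then show ?thesis
  proof (elim disjE)
    assume h: "c i = 0"
    then show ?thesis using L0[OF assms h] W0[of c i] pl assms(3) by (simp add: indeg_def mconf_def)
  next
    assume h: "c i = 1"
    then show ?thesis using L1[of n i c, OF assms(1,3) h] FMchar[OF assms(1,3), of c] pl assms(3) by (simp add: indeg_def mconf_def)
  next
    assume h: "c i = 2"
    then show ?thesis using W2[of c i n, OF h] FMchar[OF assms(1,3), of c] pl assms(3) by (simp add: indeg_def mconf_def)
  qed
qed

lemma orient: assumes "n \<ge> 3" "c \<in> SSM_recurrent n"
  shows "orient_of n (mconf n c) = (\<lambda>i. i < n \<and> \<not> Wp n c i)"
proof (cases "\<forall>i<n. mconf n c i = 1")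
  case True
  then have nz: "\<forall>i<n. c i \<noteq> 0" unfolding mconf_def by (metis zero_neq_one)
  then have "\<forall>i<n. \<not> Wp n c i" unfolding Wp_def by auto
  then show ?thesis using True unfolding orient_of_def by auto
next
  case False
  have "\<exists>z<n. c z = 0"
  proof (rule ccontr)
    assume "\<not> (\<exists>z<n. c z = 0)"
    then have "\<forall>i<n. mconf n c i = 1" unfolding mconf_def cyc_first_max_def by auto
    then show False using False by simp
  qed
  then obtain z where z: "z < n" "c z = 0" by blast
  let ?o = "\<lambda>i. i < n \<and> \<not> Wp n c i"
  have A: "?o \<in> orientations n \<and> (\<forall>i<n. indeg n ?o i = mconf n c i)"
    using indeg_ok[OF assms] unfolding orientations_def by auto
  have B: "ori = ?o" if h: "ori \<in> orientations n \<and> (\<forall>i<n. indeg n ori i = mconf n c i)" for ori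
  proof
    fix i
    show "ori i = ?o i"
    proof (cases "i < n")
      case False then show ?thesis using h unfolding orientations_def by auto
    next
      case True
      show ?thesis
      proof (rule cyc_prop[where P="\<lambda>i. ori i = ?o i", OF _ z(1) _ _ True])
        show "0 < n" using assms by simp
        have "indeg n ori z = 0" using h z unfolding mconf_def by auto
        then show "ori z = ?o z" using z W0[of c z] unfolding indeg_def by (auto split: if_splits)
      next
        fix i assume i: "i < n" "ori (cyc_pred n i) = ?o (cyc_pred n i)"
        have "indeg n ori i = indeg n ?o i" using h A i(1) by simp
        then show "ori i = ?o i" using i(2) unfolding indeg_def by (auto split: if_splits)
      qed
    qed
  qed
  have "(THE ori. ori \<in> orientations n \<and> (\<forall>i<n. indeg n ori i = mconf n c i)) = ?o"
    using A B by (rule the_equality)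
  then show ?thesis unfolding orient_of_def if_not_P[OF False] .
qed


lemma succ_lt: "n > 0 \<Longrightarrow> cyc_succ n i < n" unfolding cyc_succ_def by simp

lemma pred_succ: "n > 0 \<Longrightarrow> i < n \<Longrightarrow> cyc_pred n (cyc_succ n i) = i"
  using pred_mod_suc[of n i] unfolding cyc_succ_def by simp

lemma succ_pred: "n > 0 \<Longrightarrow> i < n \<Longrightarrow> cyc_succ n (cyc_pred n i) = i"
  by (auto simp: pred_lin succ_lin)

lemma pred_bij: "n > 0 \<Longrightarrow> bij_betw (cyc_pred n) {..<n} {..<n}"
proof -
  assume n: "n > 0"
  have "inj_on (cyc_pred n) {..<n}"
    by (rule inj_onI) (metis lessThan_iff n succ_pred)
  moreover have "cyc_pred n ` {..<n} = {..<n}"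
  proof
    show "cyc_pred n ` {..<n} \<subseteq> {..<n}" using pred_lt n by auto
    show "{..<n} \<subseteq> cyc_pred n ` {..<n}"
    proof
      fix x assume "x \<in> {..<n}"
      then show "x \<in> cyc_pred n ` {..<n}" using pred_succ[OF n, of x] succ_lt[OF n, of x]
        by (metis imageI lessThan_iff)
    qed
  qed
  ultimately show ?thesis unfolding bij_betw_def by simp
qed

lemma sum_indeg: "n > 0 \<Longrightarrow> (\<Sum>i<n. indeg n ori i) = n"
proof -
  assume n: "n > 0"
  have r: "(\<Sum>i<n. (if ori (cyc_pred n i) then 0 else 1::nat)) = (\<Sum>i<n. (if ori i then 0 else 1))"
    using sum.reindex_bij_betw[OF pred_bij[OF n], of "\<lambda>i. if ori i then 0 else 1::nat"] by simp
  have "(\<Sum>i<n. indeg n ori i) = (\<Sum>i<n. (if ori i then 1 else 0)) + (\<Sum>i<n. (if ori (cyc_pred n i) then 0 else 1::nat))"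
    unfolding indeg_def by (simp add: sum.distrib)
  also have "\<dots> = (\<Sum>i<n. (if ori i then 1 else 0) + (if ori i then 0 else 1::nat))"
    unfolding r by (simp add: sum.distrib)
  also have "\<dots> = (\<Sum>i<n. 1::nat)" by (rule sum.cong) auto
  finally show ?thesis by simp
qed

lemma edge_inj: "n \<ge> 3 \<Longrightarrow> inj_on (\<lambda>i. {cyc_pred n i, i}) {..<n}"
proof (rule inj_onI)
  fix a b assume n: "n \<ge> 3" and ab: "a \<in> {..<n}" "b \<in> {..<n}" "{cyc_pred n a, a} = {cyc_pred n b, b}"
  then have "a = b \<or> (cyc_pred n a = b \<and> a = cyc_pred n b)" by (auto simp: doubleton_eq_iff)
  then show "a = b" using n ab(1,2) by (auto simp: pred_lin split: if_splits)
qed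

definition Aof :: "nat \<Rightarrow> (nat \<Rightarrow> nat) \<Rightarrow> nat set" where
  "Aof n c = {i. i < n \<and> \<not> Wp n c i}"
definition Mof :: "nat \<Rightarrow> (nat \<Rightarrow> nat) \<Rightarrow> nat set" where
  "Mof n c = {i. i < n \<and> c i = 2 \<and> \<not> Wp n c (cyc_pred n i)}"

lemma fc: assumes "n \<ge> 3" "c \<in> SSM_recurrent n"
  shows "Sgraph n (PhiW n c) = (Aof n c, (\<lambda>i. {cyc_pred n i, i}) ` Mof n c)"
proof -
  have "Mset n c = Mof n c" unfolding Mset_def Mof_def using FMchar[OF assms(1), of _ c] by auto
  then show ?thesis unfolding Sgraph_def PhiW_def orient[OF assms] Aof_def by simp
qed

lemma Mof_sub: "Mof n c \<subseteq> {..<n}" unfolding Mof_def by auto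

lemma sum_c: assumes "n \<ge> 3" "c \<in> SSM_recurrent n"
  shows "(\<Sum>i<n. c i) = n + card (Mof n c)"
proof -
  have "c i = mconf n c i + (if i \<in> Mof n c then 1 else 0)" if i: "i < n" for i
  proof -
    have "c i = 0 \<or> c i = 1 \<or> c i = 2" using rec_le2[OF assms(2) i] by auto
    then show ?thesis using FMchar[OF assms(1) i, of c] W0[of c i n] i unfolding mconf_def Mof_def by auto
  qed
  then have "(\<Sum>i<n. c i) = (\<Sum>i<n. mconf n c i) + (\<Sum>i<n. (if i \<in> Mof n c then 1 else 0))"
    by (simp add: sum.distrib)
  also have "(\<Sum>i<n. mconf n c i) = n"
    using sum_indeg[of n "\<lambda>i. i < n \<and> \<not> Wp n c i"] indeg_ok[OF assms] assms(1) by simp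
  also have "(\<Sum>i<n. (if i \<in> Mof n c then 1 else 0)) = card (Mof n c)"
    using Mof_sub[of n c] by (simp add: sum.If_cases Int_absorb1 Int_commute)
  finally show ?thesis .
qed


definition ginv :: "nat \<Rightarrow> nat set \<times> nat set set \<Rightarrow> nat \<Rightarrow> nat" where
  "ginv n AE = (\<lambda>i. if i < n then
      (if i \<notin> fst AE then (if cyc_pred n i \<in> fst AE then 0 else 1)
       else (if cyc_pred n i \<notin> fst AE then 2 else if {cyc_pred n i, i} \<in> snd AE then 2 else 1))
     else 0)"

lemma f_in_Sub: assumes "n \<ge> 3" "c \<in> SSM_recurrent n"
  shows "Sgraph n (PhiW n c) \<in> Sub n"
proof -
  have n: "n > 0" using assms by simp
  have ne: "Aof n c \<noteq> {}"
  proof (cases "\<exists>z<n. c z = 0")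
    case True
    then obtain z where z: "z < n" "c z = 0" by blast
    then obtain k where k: "k \<in> open_int n z z" "c k = 2" using assms(2) unfolding SSM_recurrent_def by blast
    then have "k \<in> Aof n c" using open_lt[OF n k(1)] W2[of c k n] unfolding Aof_def by simp
    then show ?thesis by blast
  next
    case False
    then have "0 \<in> Aof n c" using n unfolding Aof_def Wp_def by auto
    then show ?thesis by blast
  qed
  have E1: "(\<lambda>i. {cyc_pred n i, i}) ` Mof n c \<subseteq> cycle_edges n"
  proof
    fix e assume "e \<in> (\<lambda>i. {cyc_pred n i, i}) ` Mof n c"
    then obtain m where m: "m < n" "e = {cyc_pred n m, m}" unfolding Mof_def by auto
    then have "e = {cyc_pred n m, cyc_succ n (cyc_pred n m)}" using succ_pred[OF n m(1)] by simp
    then show "e \<in> cycle_edges n" unfolding cycle_edges_def using pred_lt[OF n, of m] by blast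
  qed
  have E2: "\<forall>e\<in>(\<lambda>i. {cyc_pred n i, i}) ` Mof n c. e \<subseteq> Aof n c"
    unfolding Mof_def Aof_def using pred_lt[OF n] W2[of c _ n] by auto
  show ?thesis unfolding fc[OF assms] Sub_def using ne E1 E2 by (auto simp: Aof_def)
qed

lemma g_f: assumes "n \<ge> 3" "c \<in> SSM_recurrent n"
  shows "ginv n (Sgraph n (PhiW n c)) = c"
proof
  fix i
  have n: "n > 0" using assms by simp
  show "ginv n (Sgraph n (PhiW n c)) i = c i"
  proof (cases "i < n")
    case False
    then show ?thesis using assms(2) unfolding ginv_def SSM_recurrent_def stable_configs_def by auto
  next
    case True
    have pl: "cyc_pred n i < n" using pred_lt[OF n] .
    have c3: "c i = 0 \<or> c i = 1 \<or> c i = 2" using rec_le2[OF assms(2) True] by auto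
    have l0: "c i = 0 \<Longrightarrow> \<not> Wp n c (cyc_pred n i)" using L0[OF assms True] .
    have l1: "c i = 1 \<Longrightarrow> Wp n c i = Wp n c (cyc_pred n i)" using L1[OF assms(1) True] .
    have w0: "c i = 0 \<Longrightarrow> Wp n c i" using W0 .
    have w2: "c i = 2 \<Longrightarrow> \<not> Wp n c i" using W2 .
    have edge: "{cyc_pred n i, i} \<in> (\<lambda>i. {cyc_pred n i, i}) ` Mof n c \<longleftrightarrow> i \<in> Mof n c"
      using inj_on_image_mem_iff[OF edge_inj[OF assms(1)] _ Mof_sub] True by auto
    show ?thesis unfolding fc[OF assms] ginv_def using True pl c3 l0 l1 w0 w2 edge
      by (auto simp: Aof_def Mof_def)
  qed
qed

lemma g_in_R: assumes "n \<ge> 3" "(A, E) \<in> Sub n"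
  shows "ginv n (A, E) \<in> SSM_recurrent n"
proof -
  have n: "n > 0" using assms by simp
  let ?c = "ginv n (A, E)"
  have st: "?c \<in> stable_configs n" unfolding stable_configs_def ginv_def by auto
  have "\<exists>k\<in>open_int n i j. ?c k = 2" if ij: "i < n" "j < n" "?c i = 0" "?c j = 0" for i j
  proof (rule ccontr)
    assume no: "\<not> (\<exists>k\<in>open_int n i j. ?c k = 2)"
    have iA: "i \<notin> A" using ij unfolding ginv_def by (auto split: if_splits)
    have jA: "cyc_pred n j \<in> A" using ij unfolding ginv_def by (auto split: if_splits)
    have "t < cyc_dist n i j \<longrightarrow> (i + t) mod n \<notin> A" for t
    proof (induction t)
      case 0 then show ?case using iA ij by simp
    next
      case (Suc t)
      show ?case
      proof
        assume t: "Suc t < cyc_dist n i j"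
        let ?x = "(i + Suc t) mod n"
        have px: "cyc_pred n ?x = (i + t) mod n" using pred_mod_suc[OF n, of "i + t"] by simp
        have "?x \<in> open_int n i j" unfolding open_int_def using t by blast
        then have cx: "?c ?x \<noteq> 2" using no by blast
        have "(i + t) mod n \<notin> A" using Suc t by simp
        then show "?x \<notin> A" using cx px n unfolding ginv_def by (auto split: if_splits)
      qed
    qed
    note all = this
    have "cyc_dist n i j - 1 < cyc_dist n i j" using dist_pos[OF ij(1,2)] by simp
    then have "(i + (cyc_dist n i j - 1)) mod n \<notin> A" using all by blast
    moreover have "cyc_pred n j = (i + (cyc_dist n i j - 1)) mod n"
      using pred_mod_suc[OF n, of "i + (cyc_dist n i j - 1)"] dist_add[OF ij(1,2)] dist_pos[OF ij(1,2)] by simp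
    ultimately show False using jA by simp
  qed
  then show ?thesis using st unfolding SSM_recurrent_def by blast
qed

lemma W_g: assumes "n \<ge> 3" "(A, E) \<in> Sub n" "x < n"
  shows "Wp n (ginv n (A, E)) x \<longleftrightarrow> x \<notin> A"
proof -
  have n: "n > 0" using assms by simp
  let ?c = "ginv n (A, E)"
  have R: "?c \<in> SSM_recurrent n" using g_in_R[OF assms(1,2)] .
  have direct: "Wp n ?c i \<longleftrightarrow> i \<notin> A" if "i < n" "?c i \<noteq> 1" for i
  proof -
    have "?c i = 0 \<or> ?c i = 2" using rec_le2[OF R that(1)] that(2) by auto
    then show ?thesis using that(1) W0[of ?c i n] W2[of ?c i n] unfolding ginv_def by (auto split: if_splits)
  qed
  have step: "Wp n ?c i \<longleftrightarrow> i \<notin> A"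
    if "i < n" "Wp n ?c (cyc_pred n i) \<longleftrightarrow> cyc_pred n i \<notin> A" for i
  proof (cases "?c i = 1")
    case True
    have "i \<notin> A \<longleftrightarrow> cyc_pred n i \<notin> A" using True that(1) unfolding ginv_def by (auto split: if_splits)
    then show ?thesis using L1[of n i ?c, OF assms(1) that(1) True] that(2) by simp
  next
    case False then show ?thesis using direct that(1) by simp
  qed
  obtain j where j: "j < n" "Wp n ?c j \<longleftrightarrow> j \<notin> A"
  proof (cases "\<exists>j<n. ?c j \<noteq> 1")
    case True then show ?thesis using direct that by blast
  next
    case False
    obtain a where a: "a \<in> A" using assms(2) unfolding Sub_def by auto
    have al: "a < n" using a assms(2) unfolding Sub_def by auto
    have "\<not> Wp n ?c a" using False al unfolding Wp_def by auto
    then show ?thesis using that al a by blast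
  qed
  show ?thesis
    using cyc_prop[where P="\<lambda>i. Wp n ?c i \<longleftrightarrow> i \<notin> A", OF n j(1) j(2) step assms(3)] by blast
qed

lemma f_g: assumes "n \<ge> 3" "(A, E) \<in> Sub n"
  shows "Sgraph n (PhiW n (ginv n (A, E))) = (A, E)"
proof -
  have n: "n > 0" using assms by simp
  let ?c = "ginv n (A, E)"
  have R: "?c \<in> SSM_recurrent n" using g_in_R[OF assms] .
  have AS: "A \<subseteq> {..<n}" "E \<subseteq> cycle_edges n" "\<forall>e\<in>E. e \<subseteq> A" using assms(2) unfolding Sub_def by auto
  have a: "Aof n ?c = A" unfolding Aof_def using W_g[OF assms] AS(1) by auto
  have m: "Mof n ?c = {i. i < n \<and> {cyc_pred n i, i} \<in> E}"
  proof -
    have "?c i = 2 \<and> \<not> Wp n ?c (cyc_pred n i) \<longleftrightarrow> {cyc_pred n i, i} \<in> E" if i: "i < n" for i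
    proof -
      have "\<not> Wp n ?c (cyc_pred n i) \<longleftrightarrow> cyc_pred n i \<in> A" using W_g[OF assms pred_lt[OF n]] by simp
      moreover have "{cyc_pred n i, i} \<in> E \<Longrightarrow> i \<in> A \<and> cyc_pred n i \<in> A" using AS(3) by blast
      ultimately show ?thesis using i unfolding ginv_def by auto
    qed
    then show ?thesis unfolding Mof_def by auto
  qed
  have e: "(\<lambda>i. {cyc_pred n i, i}) ` {i. i < n \<and> {cyc_pred n i, i} \<in> E} = E"
  proof
    show "(\<lambda>i. {cyc_pred n i, i}) ` {i. i < n \<and> {cyc_pred n i, i} \<in> E} \<subseteq> E" by auto
    show "E \<subseteq> (\<lambda>i. {cyc_pred n i, i}) ` {i. i < n \<and> {cyc_pred n i, i} \<in> E}"
    proof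
      fix e assume eE: "e \<in> E"
      then obtain a where a: "a < n" "e = {a, cyc_succ n a}" using AS(2) unfolding cycle_edges_def by auto
      then have "e = {cyc_pred n (cyc_succ n a), cyc_succ n a}" using pred_succ[OF n a(1)] by simp
      then show "e \<in> (\<lambda>i. {cyc_pred n i, i}) ` {i. i < n \<and> {cyc_pred n i, i} \<in> E}"
        using eE succ_lt[OF n, of a] by (intro image_eqI[of _ _ "cyc_succ n a"]) auto
    qed
  qed
  show ?thesis unfolding fc[OF assms(1) R] a m e ..
qed

theorem mainTheorem7:
  fixes n :: nat
  assumes "n \<ge> 3"
  shows "bij_betw (\<lambda>c. Sgraph n (PhiW n c)) (SSM_recurrent n) (Sub n)
    \<and> (\<forall>c \<in> SSM_recurrent n.
          level n c = int (card (snd (Sgraph n (PhiW n c))))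
        \<and> weight01 n c = card ({..<n} - fst (Sgraph n (PhiW n c))))"
proof
  show "bij_betw (\<lambda>c. Sgraph n (PhiW n c)) (SSM_recurrent n) (Sub n)"
  proof (rule bij_betw_byWitness[where f'="ginv n"])
    show "\<forall>c\<in>SSM_recurrent n. ginv n (Sgraph n (PhiW n c)) = c" using g_f[OF assms] by blast
    show "\<forall>AE\<in>Sub n. Sgraph n (PhiW n (ginv n AE)) = AE" using f_g[OF assms] by auto
    show "(\<lambda>c. Sgraph n (PhiW n c)) ` SSM_recurrent n \<subseteq> Sub n" using f_in_Sub[OF assms] by auto
    show "ginv n ` Sub n \<subseteq> SSM_recurrent n" using g_in_R[OF assms] by auto
  qed
next
  show "\<forall>c \<in> SSM_recurrent n.
          level n c = int (card (snd (Sgraph n (PhiW n c))))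
        \<and> weight01 n c = card ({..<n} - fst (Sgraph n (PhiW n c)))"
  proof
    fix c assume c: "c \<in> SSM_recurrent n"
    have card: "card ((\<lambda>i. {cyc_pred n i, i}) ` Mof n c) = card (Mof n c)"
      using card_image[OF inj_on_subset[OF edge_inj[OF assms] Mof_sub]] .
    have lev: "level n c = int (card (Mof n c))"
      unfolding level_def using sum_c[OF assms c] by (simp add: of_nat_sum[symmetric])
    have "{..<n} - Aof n c = {i. i < n \<and> Wp n c i}" unfolding Aof_def by auto
    then have w: "weight01 n c = card ({..<n} - Aof n c)" unfolding weight01_def Wp_def by simp
    show "level n c = int (card (snd (Sgraph n (PhiW n c))))
        \<and> weight01 n c = card ({..<n} - fst (Sgraph n (PhiW n c)))"
      unfolding fc[OF assms c] using lev w card by simp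
  qed
qed

end
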